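(* Let $(u,D)$ be a minimizing configuration and $U_1$ a connected component of $U=\{u>c\}$. Then there exists a unique connected component $\mathcal{F}_1$ of $\partial U_1$ such that $U_1\subset I(\mathcal{F}_1)$.
   Context: Setting: $\Omega\subset\mathbb{R}^2$ bounded domain with Lipschitz boundary, $0<A<|\Omega|$, $0<\alpha<\bar\alpha(A)$, where $\lambda(\alpha,A)=\inf\{\int_\Omega|Dw|^2+\alpha\int_E w^2: w\in H^1_0(\Omega), \|w\|_{L^2}=1, E\subset\Omega, |E|=A\}$, a minimizing configuration $(u,D)$ attains this infimum, and $\bar\alpha(A)$ is the threshold constant of Chanillo–Grieser–Imai–Kurata–Ohnishi (2000), which guarantees $\alpha<\lambda(\alpha,A)$. Known facts from that work: the minimizer $u$ is positive in $\Omega$, satisfies $-\Delta u+\alpha\chi_D u=\lambda(\alpha,A)u$, and there is $c>0$ with $D=\{u<c\}$ up to a null set. It is established in the paper that $|Du|>0$ on $\partial U_1$ and that each connected component of $\partial U_1$ is a simple closed $C^2$ curve (Jordan curve); for such a curve $\mathcal{G}$, $I(\mathcal{G})$ denotes the bounded connected component (inside region) of $\mathbb{R}^2\setminus\mathcal{G}$ given by the Jordan curve theorem. *)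

theory Defs
  imports "HOL-Analysis.Analysis"
begin

text \<open>The plane R^2 is modelled by the type complex. Points are z, the inner
product is the real inner product on complex numbers.\<close>

text \<open>Bounded domain (open, connected, bounded) with Lipschitz boundary: near every
boundary point p, after a rotation (multiplication by a unit complex number omega)
the domain is the strict supergraph of a Lipschitz function.\<close>
definition lipschitz_domain :: "complex set \<Rightarrow> bool" where
  "lipschitz_domain \<Omega> \<longleftrightarrow> open \<Omega> \<and> connected \<Omega> \<and> bounded \<Omega> \<and> \<Omega> \<noteq> {} \<and>
     (\<forall>p \<in> frontier \<Omega>. \<exists>r > 0. \<exists>\<omega>::complex. \<exists>h::real \<Rightarrow> real. \<exists>L.
        norm \<omega> = 1 \<and> lipschitz_on L UNIV h \<and>
        \<Omega> \<inter> ball p r = {z \<in> ball p r. Im (\<omega> * (z - p)) > h (Re (\<omega> * (z - p)))})"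

definition C1c_test :: "complex set \<Rightarrow> (complex \<Rightarrow> real) \<Rightarrow> (complex \<Rightarrow> complex) \<Rightarrow> bool" where
  "C1c_test \<Omega> \<phi> grad \<longleftrightarrow>
     (\<forall>x. (\<phi> has_derivative (\<lambda>h. grad x \<bullet> h)) (at x)) \<and> continuous_on UNIV grad \<and>
     compact (closure {x. \<phi> x \<noteq> 0}) \<and> closure {x. \<phi> x \<noteq> 0} \<subseteq> \<Omega>"

text \<open>w belongs to H^1_0(Omega) with weak gradient g: w is the H^1-limit of
compactly supported C^1 functions in Omega (closure of C_c^1 = closure of C_c^infinity).\<close>
definition H10 :: "complex set \<Rightarrow> (complex \<Rightarrow> real) \<Rightarrow> (complex \<Rightarrow> complex) \<Rightarrow> bool" where
  "H10 \<Omega> w g \<longleftrightarrow>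
     w \<in> borel_measurable lebesgue \<and> g \<in> borel_measurable lebesgue \<and>
     integrable lebesgue (\<lambda>x. (w x)\<^sup>2) \<and> integrable lebesgue (\<lambda>x. (norm (g x))\<^sup>2) \<and>
     (\<exists>\<phi> \<psi>. (\<forall>n. C1c_test \<Omega> (\<phi> n) (\<psi> n) \<and>
                 integrable lebesgue (\<lambda>x. (\<phi> n x - w x)\<^sup>2) \<and>
                 integrable lebesgue (\<lambda>x. (norm (\<psi> n x - g x))\<^sup>2)) \<and>
             (\<lambda>n. (\<integral>x. (\<phi> n x - w x)\<^sup>2 \<partial>lebesgue) + (\<integral>x. (norm (\<psi> n x - g x))\<^sup>2 \<partial>lebesgue))
               \<longlonglongrightarrow> 0)"

definition energy :: "real \<Rightarrow> (complex \<Rightarrow> real) \<Rightarrow> (complex \<Rightarrow> complex) \<Rightarrow> complex set \<Rightarrow> real" where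
  "energy \<alpha> w g E = (\<integral>x. (norm (g x))\<^sup>2 \<partial>lebesgue) + \<alpha> * (\<integral>x. indicator E x * (w x)\<^sup>2 \<partial>lebesgue)"

definition admissible :: "complex set \<Rightarrow> real \<Rightarrow> (complex \<Rightarrow> real) \<Rightarrow> (complex \<Rightarrow> complex) \<Rightarrow> complex set \<Rightarrow> bool" where
  "admissible \<Omega> A w g E \<longleftrightarrow> H10 \<Omega> w g \<and> (\<integral>x. (w x)\<^sup>2 \<partial>lebesgue) = 1 \<and>
     E \<in> sets lebesgue \<and> E \<subseteq> \<Omega> \<and> measure lebesgue E = A"

definition lam :: "complex set \<Rightarrow> real \<Rightarrow> real \<Rightarrow> real" where
  "lam \<Omega> \<alpha> A = Inf {energy \<alpha> w g E | w g E. admissible \<Omega> A w g E}"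

definition minimizing_configuration ::
  "complex set \<Rightarrow> real \<Rightarrow> real \<Rightarrow> (complex \<Rightarrow> real) \<Rightarrow> complex set \<Rightarrow> bool" where
  "minimizing_configuration \<Omega> \<alpha> A u D \<longleftrightarrow>
     (\<exists>g. admissible \<Omega> A u g D \<and> energy \<alpha> u g D = lam \<Omega> \<alpha> A)"

definition C2_Jordan_curve :: "complex set \<Rightarrow> bool" where
  "C2_Jordan_curve F \<longleftrightarrow>
     (\<exists>\<gamma> \<gamma>' \<gamma>''. (\<forall>t. \<gamma> (t + 1) = \<gamma> t) \<and>
        (\<forall>t. (\<gamma> has_vector_derivative \<gamma>' t) (at t)) \<and>
        (\<forall>t. (\<gamma>' has_vector_derivative \<gamma>'' t) (at t)) \<and> continuous_on UNIV \<gamma>'' \<and>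
        (\<forall>t. \<gamma>' t \<noteq> 0) \<and> inj_on \<gamma> {0..<1} \<and> \<gamma> ` {0..1} = F)"

end

theory Submission
  imports Defs
begin

lemma jordan_facts:
  assumes "C2_Jordan_curve F"
  shows "open(inside F) \<and> connected(inside F) \<and> bounded(inside F) \<and>
         open(outside F) \<and> connected(outside F) \<and> \<not> bounded(outside F) \<and>
         inside F \<inter> outside F = {} \<and> inside F \<union> outside F = - F \<and>
         frontier(inside F) = F \<and> frontier(outside F) = F \<and> F \<noteq> {}"
proof -
  obtain \<gamma> \<gamma>' \<gamma>'' where per: "\<forall>t. \<gamma> (t + 1) = \<gamma> t"
    and d: "\<forall>t. (\<gamma> has_vector_derivative \<gamma>' t) (at t)"
    and inj: "inj_on \<gamma> {0..<1}" and img: "\<gamma> ` {0..1} = F"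
    using assms unfolding C2_Jordan_curve_def by blast
  have cont: "continuous_on {0..1} \<gamma>"
    by (metis d continuous_at_imp_continuous_on has_vector_derivative_continuous)
  have eq: "\<gamma> 1 = \<gamma> 0" using per[rule_format, of 0] by simp
  have sp: "simple_path \<gamma>"
    unfolding simple_path_def loop_free_def path_def
  proof (intro conjI cont ballI impI)
    fix x y :: real assume x: "x \<in> {0..1}" and y: "y \<in> {0..1}" and e: "\<gamma> x = \<gamma> y"
    define x' where "x' = (if x = 1 then 0 else x)"
    define y' where "y' = (if y = 1 then 0 else y)"
    have "\<gamma> x' = \<gamma> y'" using e eq by (auto simp add: x'_def y'_def)
    moreover have "x' \<in> {0..<1}" "y' \<in> {0..<1}" using x y by (auto simp: x'_def y'_def)
    ultimately have "x' = y'" using inj by (meson inj_onD)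
    then show "x = y \<or> x = 0 \<and> y = 1 \<or> x = 1 \<and> y = 0"
      using x y by (auto simp: x'_def y'_def split: if_splits)
  qed
  have pi: "path_image \<gamma> = F" using img by (simp add: path_image_def)
  have "pathfinish \<gamma> = pathstart \<gamma>" using eq by (simp add: pathfinish_def pathstart_def)
  from Jordan_inside_outside[OF sp this] pi show ?thesis
    using img by auto
qed

lemma dichot:
  assumes "open I" "open Ou" "I \<inter> Ou = {}" "connected T" "T \<subseteq> I \<union> Ou"
  shows "T \<subseteq> I \<or> T \<subseteq> Ou"
  using connectedD[OF assms(4) assms(1) assms(2)] assms(3,5) by blast

lemma jordan_dichot:
  assumes "C2_Jordan_curve F" "connected T" "T \<inter> F = {}"
  shows "T \<subseteq> inside F \<or> T \<subseteq> outside F"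
  using jordan_facts[OF assms(1)] assms(2,3) by (intro dichot) auto

lemma jordan_unbounded:
  assumes "C2_Jordan_curve F" "connected T" "T \<inter> F = {}" "\<not> bounded T"
  shows "T \<subseteq> outside F"
  using jordan_dichot[OF assms(1-3)] jordan_facts[OF assms(1)] assms(4)
  by (meson bounded_subset)

theorem lemma6p1:
  fixes \<Omega> :: "complex set" and A \<alpha> c :: real and u :: "complex \<Rightarrow> real"
    and D U U\<^sub>1 :: "complex set"
  assumes dom: "lipschitz_domain \<Omega>"
    and A: "0 < A" "A < measure lebesgue \<Omega>"
    and alpha: "0 < \<alpha>" "\<alpha> < lam \<Omega> \<alpha> A"
    and minc: "minimizing_configuration \<Omega> \<alpha> A u D"
    and cont: "continuous_on \<Omega> u"
    and pos: "\<forall>x\<in>\<Omega>. 0 < u x"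
    and c: "0 < c" "(D - {x\<in>\<Omega>. u x < c}) \<union> ({x\<in>\<Omega>. u x < c} - D) \<in> null_sets lebesgue"
    and U: "U = {x\<in>\<Omega>. u x > c}"
    and U1: "U\<^sub>1 \<in> components U"
    and grad: "\<forall>x\<in>frontier U\<^sub>1. \<exists>d. d \<noteq> 0 \<and> (u has_derivative (\<lambda>h. d \<bullet> h)) (at x)"
    and jordan: "\<forall>F\<in>components (frontier U\<^sub>1). C2_Jordan_curve F"
  shows "\<exists>!F. F \<in> components (frontier U\<^sub>1) \<and> U\<^sub>1 \<subseteq> inside F"
proof -
  have oO: "open \<Omega>" "bounded \<Omega>" using dom by (auto simp: lipschitz_domain_def)
  have "U = \<Omega> \<inter> u -` {c<..}" using U by auto
  then have oU: "open U"
    using continuous_open_preimage[OF cont oO(1), of "{c<..}"] by simp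
  have o1: "open U\<^sub>1" using U1 oU open_components by blast
  have c1: "connected U\<^sub>1" using U1 in_components_connected by blast
  have n1: "U\<^sub>1 \<noteq> {}" using U1 in_components_nonempty by blast
  have b1: "bounded U\<^sub>1"
  proof -
    have "U\<^sub>1 \<subseteq> \<Omega>" using in_components_subset[OF U1] U by auto
    then show ?thesis using oO(2) bounded_subset by blast
  qed
  have fr1: "frontier U\<^sub>1 = closure U\<^sub>1 - U\<^sub>1" using o1 by (simp add: frontier_def interior_open)
  define S where "S = closure U\<^sub>1"
  have cS: "connected S" "bounded S" "closed S"
    using c1 b1 by (auto simp: S_def connected_imp_connected_closure)
  obtain x where x: "x \<in> outside S" using outside_bounded_nonempty[OF cS(2)] by blast
  define X where "X = connected_component_set (- S) x"
  have xS: "x \<in> - S" using x by (simp add: outside_def)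
  have XC: "X \<in> components (- S)" using xS by (simp add: X_def componentsI)
  have Xub: "\<not> bounded X" using x by (simp add: X_def outside_def)
  have Xo: "open X" using XC cS(3) open_components by blast
  have Xc: "connected X" using XC in_components_connected by blast
  have XS: "X \<subseteq> - S" using XC in_components_subset by blast
  have XU1: "X \<inter> U\<^sub>1 = {}" using XS closure_subset S_def by blast
  have cXU1: "closure X \<inter> U\<^sub>1 = {}" using XU1 o1
    by (simp add: open_Int_closure_eq_empty inf_commute)
  have fX: "frontier X \<subseteq> frontier U\<^sub>1"
    using frontier_of_components_closed_complement[OF cS(3) XC] cXU1 fr1 S_def
    by (auto simp: frontier_def)
  have fXc: "connected (frontier X)"
    using connected_frontier_component_complement[OF cS(1) XC] .
  have Xne: "X \<noteq> {}" using xS X_def connected_component_refl by blast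
  have "X \<noteq> UNIV" using XU1 n1 by auto
  then have fXne: "frontier X \<noteq> {}" using frontier_not_empty Xne by blast
  obtain F where F: "F \<in> components (frontier U\<^sub>1)" "frontier X \<subseteq> F"
  proof -
    have "frontier U\<^sub>1 \<noteq> {}" using fX fXne by blast
    from exists_component_superset[OF fX this fXc] show ?thesis using that by blast
  qed
  have FJ: "C2_Jordan_curve F" using F jordan by blast
  have Ffr: "\<And>G. G \<in> components (frontier U\<^sub>1) \<Longrightarrow> G \<subseteq> frontier U\<^sub>1"
    using in_components_subset by blast
  have U1G: "\<And>G. G \<in> components (frontier U\<^sub>1) \<Longrightarrow> U\<^sub>1 \<inter> G = {}"
    using Ffr fr1 by blast
  have ex: "U\<^sub>1 \<subseteq> inside F"
  proof (rule ccontr)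
    assume "\<not> U\<^sub>1 \<subseteq> inside F"
    then have Uo: "U\<^sub>1 \<subseteq> outside F" using jordan_dichot[OF FJ c1 U1G[OF F(1)]] by blast
    have "X \<inter> F = {}" using XS Ffr[OF F(1)] fr1 S_def by blast
    then have XoF: "X \<subseteq> outside F" using jordan_unbounded[OF FJ Xc _ Xub] by blast
    have jf: "open (outside F)" "connected (outside F)" "inside F \<inter> outside F = {}" "inside F \<union> outside F = - F"
      using jordan_facts[OF FJ] by auto
    have cov: "outside F \<subseteq> X \<union> - closure X"
      using F(2) jf(4) closure_Un_frontier[of X] by blast
    have dj: "X \<inter> (- closure X) \<inter> outside F = {}" using closure_subset by blast
    have oc: "open (- closure X)" using closed_closure open_Compl by blast
    have dd: "X \<inter> outside F = {} \<or> (- closure X) \<inter> outside F = {}"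
      by (rule connectedD[OF jf(2) Xo oc dj cov])
    have "X \<inter> outside F \<noteq> {}" using XoF Xne by blast
    with dd have "(- closure X) \<inter> outside F = {}" by blast
    then have "outside F \<subseteq> X" using cov by blast
    then show False using Uo XU1 n1 by blast
  qed
  show ?thesis
  proof (rule ex1I[of _ F])
    show "F \<in> components (frontier U\<^sub>1) \<and> U\<^sub>1 \<subseteq> inside F" using F ex by blast
  next
    fix G assume G: "G \<in> components (frontier U\<^sub>1) \<and> U\<^sub>1 \<subseteq> inside G"
    show "G = F"
    proof (rule ccontr)
      assume ne: "G \<noteq> F"
      have disj: "G \<inter> F = {}" using components_nonoverlap G F(1) ne by blast
      have GJ: "C2_Jordan_curve G" using G jordan by blast
      have sub: "\<And>P Q. P \<in> components (frontier U\<^sub>1) \<Longrightarrow> Q \<in> components (frontier U\<^sub>1)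
          \<Longrightarrow> U\<^sub>1 \<subseteq> inside P \<Longrightarrow> P \<inter> Q = {} \<Longrightarrow> Q \<subseteq> inside P"
      proof -
        fix P Q assume P: "P \<in> components (frontier U\<^sub>1)" and Q: "Q \<in> components (frontier U\<^sub>1)"
          and UP: "U\<^sub>1 \<subseteq> inside P" and PQ: "P \<inter> Q = {}"
        have PJ: "C2_Jordan_curve P" using P jordan by blast
        have "Q \<subseteq> closure U\<^sub>1" using Ffr[OF Q] fr1 by blast
        also have "\<dots> \<subseteq> closure (inside P)" using UP closure_mono by blast
        also have "\<dots> = inside P \<union> P"
          using jordan_facts[OF PJ] closure_Un_frontier[of "inside P"] by simp
        finally show "Q \<subseteq> inside P" using PQ by blast
      qed
      have "\<And>P Q. P \<in> components (frontier U\<^sub>1) \<Longrightarrow> Q \<in> components (frontier U\<^sub>1)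
          \<Longrightarrow> U\<^sub>1 \<subseteq> inside P \<Longrightarrow> P \<inter> Q = {} \<Longrightarrow> P \<subseteq> outside Q"
      proof -
        fix P Q assume P: "P \<in> components (frontier U\<^sub>1)" and Q: "Q \<in> components (frontier U\<^sub>1)"
          and UP: "U\<^sub>1 \<subseteq> inside P" and PQ: "P \<inter> Q = {}"
        have PJ: "C2_Jordan_curve P" using P jordan by blast
        have QJ: "C2_Jordan_curve Q" using Q jordan by blast
        have QP: "Q \<subseteq> inside P" using sub[OF P Q UP PQ] .
        have jp: "connected (outside P)" "\<not> bounded (outside P)" "inside P \<inter> outside P = {}"
            "frontier (outside P) = P"
          using jordan_facts[OF PJ] by auto
        have "outside P \<inter> Q = {}" using QP jp(3) by blast
        then have OPQ: "outside P \<subseteq> outside Q" using jordan_unbounded[OF QJ jp(1) _ jp(2)] by blast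
        have "P \<subseteq> closure (outside P)" using jp(4) frontier_def by (metis Diff_subset)
        also have "\<dots> \<subseteq> closure (outside Q)" using OPQ closure_mono by blast
        also have "\<dots> = outside Q \<union> Q"
          using jordan_facts[OF QJ] closure_Un_frontier[of "outside Q"] by simp
        finally show "P \<subseteq> outside Q" using PQ by blast
      qed
      from this[of F G] have "F \<subseteq> outside G" using F(1) G ex disj by blast
      moreover have "F \<subseteq> inside G" using sub[of G F] G F(1) disj by blast
      moreover have "F \<noteq> {}" "inside G \<inter> outside G = {}"
        using jordan_facts[OF FJ] jordan_facts[OF GJ] by auto
      ultimately show False by blast
    qed
  qed
qed

end
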